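(* Let $N\ge2$, let $\Omega_1,\Omega_2\subset\mathbb{R}^N$ be bounded domains with $C^2$ boundary, and let $\Gamma_i\subset\partial\Omega_i$, $i=1,2$, be closed sets. Let $p\colon\bar\Omega_1\to[1,\infty)$ and $q\colon\bar\Omega_1\to[1,\infty)$ be measurable exponents. If $\Omega_2\subset\Omega_1$, $\partial\Omega_2\cap\Omega_1\subset\Gamma_2$ and $\Gamma_1\cap\partial\Omega_2\subset\Gamma_2$, then $$T(p(\cdot),q(\cdot),\Omega_1,\Gamma_1)\le T(p(\cdot),q(\cdot),\Omega_2,\Gamma_2).$$
   Context: For a domain $D$, $L^{s(x)}$ spaces carry the Luxemburg norm $\|u\|_{s(x)}=\inf\{\lambda>0:\int|u/\lambda|^{s(x)}\le1\}$ (on $\partial D$ w.r.t. surface measure). $\|u\|_{1,p(x),D}=\inf\{\lambda>0:\int_D|u/\lambda|^{p(x)}+|\nabla u/\lambda|^{p(x)}dx\le1\}$. For closed $\Gamma\subset\partial D$, $W^{1,p(x)}_\Gamma(D)$ is the closure in this norm of $\{\phi\in C^\infty(\bar D):\phi$ vanishes in a neighborhood of $\Gamma\}$, and $$T(p(\cdot),q(\cdot),D,\Gamma)=\inf_{v\in W^{1,p(x)}_\Gamma(D)}\frac{\|v\|_{1,p(x),D}}{\|v\|_{L^{q(x)}(\partial D)}},$$ the infimum over $v$ with nonzero trace. *)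

theory Defs
  imports "HOL-Analysis.Analysis"
begin

text \<open>Normalised s-dimensional Hausdorff outer measure (normalisation alpha(s) 2^(-s)
  diam^s, so that H^(N-1) restricted to a C^2 hypersurface is surface measure).\<close>

definition haus_coef :: "real \<Rightarrow> real" where
  "haus_coef s = pi powr (s / 2) / Gamma (s / 2 + 1) / 2 powr s"

definition haus_delta :: "real \<Rightarrow> real \<Rightarrow> ('a::metric_space) set \<Rightarrow> ennreal" where
  "haus_delta s \<delta> A =
     Inf {(\<Sum>i. ennreal (haus_coef s * diameter (C i) powr s)) | C.
            A \<subseteq> (\<Union>i. C i) \<and> (\<forall>i. diameter (C i) \<le> \<delta>)}"

definition hausdorff_outer :: "real \<Rightarrow> ('a::metric_space) set \<Rightarrow> ennreal" where
  "hausdorff_outer s A = (SUP \<delta>\<in>{0<..}. haus_delta s \<delta> A)"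

definition hausdorff_measure :: "real \<Rightarrow> ('a::metric_space) measure" where
  "hausdorff_measure s = measure_of UNIV (sets borel) (hausdorff_outer s)"

definition surface_measure :: "(real^'n) set \<Rightarrow> (real^'n) measure" where
  "surface_measure D = restrict_space (hausdorff_measure (real CARD('n) - 1)) (frontier D)"

definition C2_on :: "(real^'n \<Rightarrow> real) \<Rightarrow> (real^'n) set \<Rightarrow> bool" where
  "C2_on \<psi> U \<longleftrightarrow> (\<exists>g H.
      (\<forall>x\<in>U. (\<psi> has_derivative (\<lambda>h. g x \<bullet> h)) (at x)) \<and>
      (\<forall>x\<in>U. (g has_derivative (\<lambda>h. H x *v h)) (at x)) \<and>
      continuous_on U H)"

definition C2_domain :: "(real^'n) set \<Rightarrow> bool" where
  "C2_domain D \<longleftrightarrow> open D \<and> connected D \<and> D \<noteq> {} \<and> bounded D \<and>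
     (\<forall>x0\<in>frontier D. \<exists>r>0. \<exists>\<psi>. C2_on \<psi> (ball x0 r) \<and>
        (\<forall>x\<in>ball x0 r. frechet_derivative \<psi> (at x) \<noteq> (\<lambda>h. 0)) \<and>
        D \<inter> ball x0 r = {x\<in>ball x0 r. \<psi> x < 0})"

definition partial_deriv :: "(real^'n \<Rightarrow> real) \<Rightarrow> 'n \<Rightarrow> real^'n \<Rightarrow> real" where
  "partial_deriv f i x = frechet_derivative f (at x) (axis i 1)"

definition grad :: "(real^'n \<Rightarrow> real) \<Rightarrow> real^'n \<Rightarrow> real^'n" where
  "grad f x = (\<chi> i. partial_deriv f i x)"

definition smooth_fun :: "(real^'n \<Rightarrow> real) \<Rightarrow> bool" where
  "smooth_fun f \<longleftrightarrow> (\<exists>S. f \<in> S \<and>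
     (\<forall>h\<in>S. (\<forall>x. h differentiable (at x)) \<and> continuous_on UNIV h \<and>
             (\<forall>i. partial_deriv h i \<in> S)))"

text \<open>phi in C^infinity(closure D) (restriction of a smooth function on R^N) vanishing in a
  neighbourhood of Gamma.\<close>
definition test_class :: "(real^'n) set \<Rightarrow> (real^'n) set \<Rightarrow> (real^'n \<Rightarrow> real) set" where
  "test_class D \<Gamma> = {\<phi>. smooth_fun \<phi> \<and>
      (\<exists>U. open U \<and> \<Gamma> \<subseteq> U \<and> (\<forall>x\<in>U \<inter> closure D. \<phi> x = 0))}"

definition sob_norm :: "(real^'n \<Rightarrow> real) \<Rightarrow> (real^'n) set \<Rightarrow>
                        (real^'n \<Rightarrow> real) \<Rightarrow> (real^'n \<Rightarrow> real^'n) \<Rightarrow> ereal" where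
  "sob_norm p D u G = Inf {ereal t | t. t > 0 \<and>
      (\<integral>\<^sup>+ x \<in> D. ennreal (\<bar>u x / t\<bar> powr p x + (norm (G x) / t) powr p x) \<partial>lebesgue) \<le> 1}"

definition bnd_norm :: "(real^'n \<Rightarrow> real) \<Rightarrow> (real^'n) set \<Rightarrow> (real^'n \<Rightarrow> real) \<Rightarrow> ereal" where
  "bnd_norm q D g = Inf {ereal t | t. t > 0 \<and>
      (\<integral>\<^sup>+ x. ennreal (\<bar>g x / t\<bar> powr q x) \<partial>surface_measure D) \<le> 1}"

text \<open>(u, G, g): u is an element of the closure of the test class in the norm
  sob_norm, G its (weak) gradient, and g its trace on the boundary, i.e. the L^1(boundary)
  limit of the boundary values of the approximating smooth functions.\<close>
definition W_trace :: "(real^'n \<Rightarrow> real) \<Rightarrow> (real^'n) set \<Rightarrow> (real^'n) set \<Rightarrow>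
      (real^'n \<Rightarrow> real) \<Rightarrow> (real^'n \<Rightarrow> real^'n) \<Rightarrow> (real^'n \<Rightarrow> real) \<Rightarrow> bool" where
  "W_trace p D \<Gamma> u G g \<longleftrightarrow>
     u \<in> borel_measurable lebesgue \<and> G \<in> borel_measurable lebesgue \<and>
     g \<in> borel_measurable (surface_measure D) \<and>
     (\<exists>\<phi>::nat \<Rightarrow> real^'n \<Rightarrow> real. (\<forall>k. \<phi> k \<in> test_class D \<Gamma>) \<and>
        ((\<lambda>k. sob_norm p D (\<lambda>x. \<phi> k x - u x) (\<lambda>x. grad (\<phi> k) x - G x)) \<longlongrightarrow> 0) sequentially \<and>
        ((\<lambda>k. \<integral>\<^sup>+ x. ennreal \<bar>\<phi> k x - g x\<bar> \<partial>surface_measure D) \<longlongrightarrow> 0) sequentially)"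

definition T_const :: "(real^'n \<Rightarrow> real) \<Rightarrow> (real^'n \<Rightarrow> real) \<Rightarrow> (real^'n) set \<Rightarrow>
                       (real^'n) set \<Rightarrow> ereal" where
  "T_const p q D \<Gamma> = Inf {sob_norm p D u G / bnd_norm q D g | u G g.
      W_trace p D \<Gamma> u G g \<and> \<not> (AE x in surface_measure D. g x = 0)}"

end

theory Submission
  imports Defs "HOL-Computational_Algebra.Polynomial"
begin


lemma smooth_funI:
  assumes "P h"
    and "\<And>h. P h \<Longrightarrow> (\<forall>x. h differentiable (at x)) \<and> continuous_on UNIV h \<and> (\<forall>i. P (partial_deriv h i))"
  shows "smooth_fun h"
  unfolding smooth_fun_def
  by (rule exI[of _ "Collect P"]) (use assms in auto)

lemma smooth_funD:
  assumes "smooth_fun h"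
  shows "(\<forall>x. h differentiable (at x)) \<and> continuous_on UNIV h \<and> (\<forall>i. smooth_fun (partial_deriv h i))"
proof -
  obtain S where S: "h \<in> S" "\<forall>h\<in>S. (\<forall>x. h differentiable (at x)) \<and> continuous_on UNIV h \<and>
             (\<forall>i. partial_deriv h i \<in> S)" using assms unfolding smooth_fun_def by blast
  have "smooth_fun (partial_deriv h i)" for i
    unfolding smooth_fun_def using S by blast
  with S show ?thesis by blast
qed

lemma smooth_deriv:
  assumes "smooth_fun h"
  shows "(h has_derivative frechet_derivative h (at x)) (at x)"
  using smooth_funD[OF assms] frechet_derivative_works by blast

lemma partial_derivI:
  assumes "(h has_derivative D) (at x)"
  shows "partial_deriv h i x = D (axis i 1)"
  unfolding partial_deriv_def using frechet_derivative_at[OF assms] by simp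

lemma diff_cont:
  assumes "\<forall>x. h differentiable (at x)"
  shows "continuous_on UNIV h"
  by (meson assms differentiable_at_imp_differentiable_on differentiable_imp_continuous_on)

definition SP :: "((real^'n\<Rightarrow>real)\<times>(real^'n\<Rightarrow>real)) list \<Rightarrow> real^'n \<Rightarrow> real" where
  "SP L x = (\<Sum>(a,b)\<leftarrow>L. a x * b x)"

lemma SP_deriv:
  assumes "\<forall>(a,b)\<in>set L. smooth_fun a \<and> smooth_fun b"
  shows "(SP L has_derivative (\<lambda>v. \<Sum>(a,b)\<leftarrow>L. a x * frechet_derivative b (at x) v
            + frechet_derivative a (at x) v * b x)) (at x)"
  using assms
proof (induction L)
  case Nil
  then show ?case by (simp add: SP_def)
next
  case (Cons ab L)
  obtain a b where ab: "ab = (a,b)" by fastforce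
  have sa: "smooth_fun a" "smooth_fun b" using Cons.prems ab by auto
  have "((\<lambda>x. a x * b x + SP L x) has_derivative
     (\<lambda>v. (a x * frechet_derivative b (at x) v + frechet_derivative a (at x) v * b x) +
       (\<Sum>(a,b)\<leftarrow>L. a x * frechet_derivative b (at x) v + frechet_derivative a (at x) v * b x))) (at x)"
    by (intro has_derivative_add has_derivative_mult smooth_deriv sa Cons.IH)
       (use Cons.prems in auto)
  then show ?case by (simp add: SP_def ab)
qed

lemma SP_partial:
  assumes "\<forall>(a,b)\<in>set L. smooth_fun a \<and> smooth_fun b"
  shows "partial_deriv (SP L) i = SP (concat (map (\<lambda>(a,b). [(a, partial_deriv b i), (partial_deriv a i, b)]) L))"
proof
  fix x
  have "partial_deriv (SP L) i x = (\<Sum>(a,b)\<leftarrow>L. a x * frechet_derivative b (at x) (axis i 1)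
            + frechet_derivative a (at x) (axis i 1) * b x)"
    by (rule partial_derivI[OF SP_deriv[OF assms]])
  also have "\<dots> = SP (concat (map (\<lambda>(a,b). [(a, partial_deriv b i), (partial_deriv a i, b)]) L)) x"
    unfolding SP_def partial_deriv_def
  proof (induction L)
    case (Cons ab L)
    obtain a b where "ab = (a,b)" by fastforce
    with Cons show ?case by simp
  qed simp
  finally show "partial_deriv (SP L) i x = \<dots>" .
qed

lemma smooth_SP:
  assumes "\<forall>(a,b)\<in>set L. smooth_fun a \<and> smooth_fun b"
  shows "smooth_fun (SP L)"
proof (rule smooth_funI[where P="\<lambda>h. \<exists>L. h = SP L \<and> (\<forall>(a,b)\<in>set L. smooth_fun a \<and> smooth_fun b)"])
  show "\<exists>L'. SP L = SP L' \<and> (\<forall>(a,b)\<in>set L'. smooth_fun a \<and> smooth_fun b)" using assms by blast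
next
  fix h assume "\<exists>L. h = SP L \<and> (\<forall>(a,b)\<in>set L. smooth_fun a \<and> smooth_fun b)"
  then obtain L where L: "h = SP L" "\<forall>(a,b)\<in>set L. smooth_fun a \<and> smooth_fun b" by blast
  have d: "\<forall>x. h differentiable (at x)"
    using SP_deriv[OF L(2)] L(1) differentiable_def by blast
  moreover have "continuous_on UNIV h" using diff_cont[OF d] .
  moreover have "\<forall>i. \<exists>L'. partial_deriv h i = SP L' \<and> (\<forall>(a,b)\<in>set L'. smooth_fun a \<and> smooth_fun b)"
  proof
    fix i
    show "\<exists>L'. partial_deriv h i = SP L' \<and> (\<forall>(a,b)\<in>set L'. smooth_fun a \<and> smooth_fun b)"
      apply (rule exI[of _ "concat (map (\<lambda>(a,b). [(a, partial_deriv b i), (partial_deriv a i, b)]) L)"])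
      apply (rule conjI)
      using L SP_partial[OF L(2)] apply simp
      using L(2) smooth_funD by fastforce
  qed
  ultimately show "(\<forall>x. h differentiable (at x)) \<and> continuous_on UNIV h \<and>
     (\<forall>i. \<exists>L. partial_deriv h i = SP L \<and> (\<forall>(a,b)\<in>set L. smooth_fun a \<and> smooth_fun b))" by blast
qed

lemma smooth_const: "smooth_fun (\<lambda>x. c)"
proof (rule smooth_funI[where P="\<lambda>h. \<exists>c. h = (\<lambda>x. c)"])
  fix h assume "\<exists>c. h = (\<lambda>x::real^'a. c::real)"
  then obtain c where h: "h = (\<lambda>x. c)" by blast
  have "partial_deriv h i = (\<lambda>x. 0)" for i
    using partial_derivI[of h "\<lambda>v. 0"] h by auto
  then show "(\<forall>x. h differentiable (at x)) \<and> continuous_on UNIV h \<and> (\<forall>i. \<exists>c. partial_deriv h i = (\<lambda>x. c))"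
    using h by auto
qed auto

lemma smooth_mult:
  assumes "smooth_fun a" "smooth_fun b"
  shows "smooth_fun (\<lambda>x. a x * b x)"
proof -
  have "SP [(a,b)] = (\<lambda>x. a x * b x)" by (auto simp: SP_def)
  then show ?thesis using smooth_SP[of "[(a,b)]"] assms by auto
qed

lemma smooth_add:
  assumes "smooth_fun a" "smooth_fun b"
  shows "smooth_fun (\<lambda>x. a x + b x)"
proof -
  have "SP [(a,\<lambda>x. 1),(b,\<lambda>x. 1)] = (\<lambda>x. a x + b x)" by (auto simp: SP_def)
  then show ?thesis using smooth_SP[of "[(a,\<lambda>x. 1),(b,\<lambda>x. 1)]"] assms smooth_const by auto
qed

lemma smooth_cmult:
  assumes "smooth_fun a"
  shows "smooth_fun (\<lambda>x. c * a x)"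
  using smooth_mult[OF smooth_const assms] .

lemma smooth_diff:
  assumes "smooth_fun a" "smooth_fun b"
  shows "smooth_fun (\<lambda>x. a x - b x)"
  using smooth_add[OF assms(1) smooth_cmult[OF assms(2), of "-1"]] by simp

lemma smooth_power:
  assumes "smooth_fun a"
  shows "smooth_fun (\<lambda>x. a x ^ n)"
proof (induction n)
  case 0 then show ?case using smooth_const by simp
next
  case (Suc n) then show ?case using smooth_mult[OF assms Suc] by simp
qed

lemma smooth_sum:
  assumes "finite I" "\<And>i. i \<in> I \<Longrightarrow> smooth_fun (f i)"
  shows "smooth_fun (\<lambda>x. \<Sum>i\<in>I. f i x)"
  using assms
proof (induction I rule: finite_induct)
  case empty then show ?case using smooth_const by simp
next
  case (insert i I)
  then show ?case using smooth_add[of "f i" "\<lambda>x. \<Sum>i\<in>I. f i x"] by simp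
qed

lemma smooth_component: "smooth_fun (\<lambda>x::real^'n. x $ j)"
proof (rule smooth_funI[where P="\<lambda>h. h = (\<lambda>x. x $ j) \<or> (\<exists>c. h = (\<lambda>x. c))"])
  fix h :: "real^'n \<Rightarrow> real" assume "h = (\<lambda>x. x $ j) \<or> (\<exists>c. h = (\<lambda>x. c))"
  then show "(\<forall>x. h differentiable (at x)) \<and> continuous_on UNIV h \<and>
      (\<forall>i. partial_deriv h i = (\<lambda>x. x $ j) \<or> (\<exists>c. partial_deriv h i = (\<lambda>x. c)))"
  proof
    assume h: "h = (\<lambda>x. x $ j)"
    have hd: "(h has_derivative (\<lambda>v. v $ j)) (at x)" for x
      unfolding h by (rule bounded_linear_imp_has_derivative) (rule bounded_linear_vec_nth)
    then have "partial_deriv h i = (\<lambda>x. axis i 1 $ j)" for i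
      using partial_derivI[OF hd] by auto
    moreover have d: "\<forall>x. h differentiable (at x)" using hd differentiable_def by blast
    moreover have "continuous_on UNIV h" using diff_cont[OF d] .
    ultimately show ?thesis by blast
  next
    assume "\<exists>c. h = (\<lambda>x. c)"
    then obtain c where h: "h = (\<lambda>x. c)" by blast
    have "partial_deriv h i = (\<lambda>x. 0)" for i
      using partial_derivI[of h "\<lambda>v. 0"] h by auto
    then show ?thesis using h by auto
  qed
qed auto



lemma smooth_comp_family:
  assumes FD: "\<And>n t. (fd n has_real_derivative fd (Suc n) t) (at t)"
    and r: "smooth_fun \<rho>"
  shows "smooth_fun (\<lambda>x. fd n (\<rho> x))"
proof (rule smooth_funI[where P="\<lambda>h. \<exists>L. h = (\<lambda>x. \<Sum>(a,k)\<leftarrow>L. a x * fd k (\<rho> x)) \<and> (\<forall>(a,k)\<in>set L. smooth_fun a)"])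
  show "\<exists>L. (\<lambda>x. fd n (\<rho> x)) = (\<lambda>x. \<Sum>(a,k)\<leftarrow>L. a x * fd k (\<rho> x)) \<and> (\<forall>(a,k)\<in>set L. smooth_fun a)"
    by (rule exI[of _ "[(\<lambda>x. 1, n)]"]) (simp add: smooth_const)
next
  fix h assume "\<exists>L. h = (\<lambda>x. \<Sum>(a,k)\<leftarrow>L. a x * fd k (\<rho> x)) \<and> (\<forall>(a,k)\<in>set L. smooth_fun a)"
  then obtain L where h: "h = (\<lambda>x. \<Sum>(a,k)\<leftarrow>L. a x * fd k (\<rho> x))" and L: "\<forall>(a,k)\<in>set L. smooth_fun a"
    by blast
  have cd: "((\<lambda>x. fd k (\<rho> x)) has_derivative (\<lambda>v. fd (Suc k) (\<rho> x) * frechet_derivative \<rho> (at x) v)) (at x)"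
    for k x
  proof -
    have "(fd k has_derivative (*) (fd (Suc k) (\<rho> x))) (at (\<rho> x))"
      using FD has_field_derivative_def by blast
    from has_derivative_compose[OF smooth_deriv[OF r] this] show ?thesis by (simp add: o_def)
  qed
  have hd: "(h has_derivative (\<lambda>v. \<Sum>(a,k)\<leftarrow>L. a x * (fd (Suc k) (\<rho> x) * frechet_derivative \<rho> (at x) v)
      + frechet_derivative a (at x) v * fd k (\<rho> x))) (at x)" for x
    unfolding h using L
  proof (induction L)
    case Nil then show ?case by simp
  next
    case (Cons ak L)
    obtain a k where ak: "ak = (a,k)" by fastforce
    have sa: "smooth_fun a" using Cons.prems ak by auto
    have "((\<lambda>x. a x * fd k (\<rho> x) + (\<Sum>(a,k)\<leftarrow>L. a x * fd k (\<rho> x))) has_derivative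
      (\<lambda>v. (a x * (fd (Suc k) (\<rho> x) * frechet_derivative \<rho> (at x) v) + frechet_derivative a (at x) v * fd k (\<rho> x))
        + (\<Sum>(a,k)\<leftarrow>L. a x * (fd (Suc k) (\<rho> x) * frechet_derivative \<rho> (at x) v)
      + frechet_derivative a (at x) v * fd k (\<rho> x)))) (at x)"
      by (intro has_derivative_add has_derivative_mult smooth_deriv sa cd Cons.IH)
         (use Cons.prems in auto)
    then show ?case by (simp add: ak)
  qed
  have d: "\<forall>x. h differentiable (at x)" using hd differentiable_def by blast
  moreover have "continuous_on UNIV h" using diff_cont[OF d] .
  moreover have "\<exists>L'. partial_deriv h i = (\<lambda>x. \<Sum>(a,k)\<leftarrow>L'. a x * fd k (\<rho> x)) \<and> (\<forall>(a,k)\<in>set L'. smooth_fun a)" for i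
  proof (rule exI[of _ "concat (map (\<lambda>(a,k). [(partial_deriv a i, k), (\<lambda>x. a x * partial_deriv \<rho> i x, Suc k)]) L)"],
         rule conjI)
    show "partial_deriv h i = (\<lambda>x. \<Sum>(a,k)\<leftarrow>concat (map (\<lambda>(a,k). [(partial_deriv a i, k), (\<lambda>x. a x * partial_deriv \<rho> i x, Suc k)]) L). a x * fd k (\<rho> x))"
    proof
      fix x
      show "partial_deriv h i x = (\<Sum>(a,k)\<leftarrow>concat (map (\<lambda>(a,k). [(partial_deriv a i, k), (\<lambda>x. a x * partial_deriv \<rho> i x, Suc k)]) L). a x * fd k (\<rho> x))"
        unfolding partial_derivI[OF hd]
      proof (induction L)
        case (Cons ak L)
        obtain a k where "ak = (a,k)" by fastforce
        with Cons show ?case by (simp add: partial_deriv_def algebra_simps)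
      qed simp
    qed
    show "\<forall>(a,k)\<in>set (concat (map (\<lambda>(a,k). [(partial_deriv a i, k), (\<lambda>x. a x * partial_deriv \<rho> i x, Suc k)]) L)). smooth_fun a"
      using L smooth_funD smooth_mult r by fastforce
  qed
  ultimately show "(\<forall>x. h differentiable (at x)) \<and> continuous_on UNIV h \<and>
    (\<forall>i. \<exists>L. partial_deriv h i = (\<lambda>x. \<Sum>(a,k)\<leftarrow>L. a x * fd k (\<rho> x)) \<and> (\<forall>(a,k)\<in>set L. smooth_fun a))"
    by blast
qed

lemma smooth_divide:
  assumes D: "smooth_fun D" "\<And>x. D x \<noteq> 0" and a: "smooth_fun a"
  shows "smooth_fun (\<lambda>x. a x / D x)"
proof (rule smooth_funI[where P="\<lambda>h. \<exists>a n. h = (\<lambda>x. a x / D x ^ n) \<and> smooth_fun a"])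
  show "\<exists>b n. (\<lambda>x. a x / D x) = (\<lambda>x. b x / D x ^ n) \<and> smooth_fun b"
    using a by (intro exI[of _ a] exI[of _ 1]) simp
next
  fix h assume "\<exists>a n. h = (\<lambda>x. a x / D x ^ n) \<and> smooth_fun a"
  then obtain b n where h: "h = (\<lambda>x. b x / D x ^ n)" and b: "smooth_fun b" by blast
  have hd: "(h has_derivative (\<lambda>v. (frechet_derivative b (at x) v * D x ^ n
       - b x * (of_nat n * frechet_derivative D (at x) v * D x ^ (n - 1))) / (D x ^ n * D x ^ n))) (at x)" for x
    unfolding h
    by (rule has_derivative_divide'[OF smooth_deriv[OF b] has_derivative_power[OF smooth_deriv[OF D(1)]]])
       (simp add: D(2))
  have d: "\<forall>x. h differentiable (at x)" using hd differentiable_def by blast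
  moreover have "continuous_on UNIV h" using diff_cont[OF d] .
  moreover have "\<exists>c m. partial_deriv h i = (\<lambda>x. c x / D x ^ m) \<and> smooth_fun c" for i
  proof (intro exI conjI)
    show "partial_deriv h i = (\<lambda>x. (partial_deriv b i x * D x ^ n
       - b x * (of_nat n * partial_deriv D i x * D x ^ (n - 1))) / D x ^ (n + n))"
      by (rule ext, unfold partial_derivI[OF hd]) (simp add: partial_deriv_def power_add)
    show "smooth_fun (\<lambda>x. partial_deriv b i x * D x ^ n
       - b x * (of_nat n * partial_deriv D i x * D x ^ (n - 1)))"
      by (intro smooth_diff smooth_mult smooth_power smooth_cmult b D(1) smooth_funD[THEN conjunct2, THEN conjunct2, rule_format])
  qed
  ultimately show "(\<forall>x. h differentiable (at x)) \<and> continuous_on UNIV h \<and>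
    (\<forall>i. \<exists>a n. partial_deriv h i = (\<lambda>x. a x / D x ^ n) \<and> smooth_fun a)" by blast
qed



fun Pf :: "nat \<Rightarrow> real poly" where
  "Pf 0 = 1"
| "Pf (Suc n) = [:0,0,1:] * (Pf n - pderiv (Pf n))"

definition fd :: "nat \<Rightarrow> real \<Rightarrow> real" where
  "fd n t = (if t > 0 then poly (Pf n) (1/t) * exp (-(1/t)) else 0)"

lemma fd_pos_deriv:
  assumes t: "t > 0"
  shows "((\<lambda>t. poly P (1/t) * exp (-(1/t))) has_real_derivative
           poly ([:0,0,1:] * (P - pderiv P)) (1/t) * exp (-(1/t))) (at t)"
proof -
  have "((\<lambda>t. poly P (1/t) * exp (-(1/t))) has_real_derivative
     (poly (pderiv P) (1/t) * (- 1 / t^2)) * exp (-(1/t)) + poly P (1/t) * (exp (-(1/t)) * (1/t^2))) (at t)"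
    using t by (auto intro!: derivative_eq_intros simp: power2_eq_square field_simps)
  moreover have "(poly (pderiv P) (1/t) * (- 1 / t^2)) * exp (-(1/t)) + poly P (1/t) * (exp (-(1/t)) * (1/t^2))
     = poly ([:0,0,1:] * (P - pderiv P)) (1/t) * exp (-(1/t))"
    by (simp add: algebra_simps power2_eq_square divide_simps)
  ultimately show ?thesis by simp
qed

lemma poly_exp_lim:
  "((\<lambda>s. poly P s * s / exp s) \<longlongrightarrow> (0::real)) at_top"
proof -
  have "((\<lambda>s. \<Sum>i\<le>degree P. coeff P i * (s ^ Suc i / exp s)) \<longlongrightarrow> (\<Sum>i\<le>degree P. coeff P i * 0)) at_top"
    by (intro tendsto_sum tendsto_mult tendsto_const tendsto_power_div_exp_0)
  moreover have "(\<Sum>i\<le>degree P. coeff P i * (s ^ Suc i / exp s)) = poly P s * s / exp s" for s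
    unfolding poly_altdef sum_distrib_right sum_divide_distrib
    by (rule sum.cong) (simp_all add: algebra_simps)
  ultimately show ?thesis by simp
qed

lemma fd_deriv0: "(fd n has_real_derivative 0) (at 0)"
proof -
  have r: "((\<lambda>h. (fd n (0 + h) - fd n 0) / h) \<longlongrightarrow> 0) (at_right 0)"
  proof -
    have "((\<lambda>h. (\<lambda>s. poly (Pf n) s * s / exp s) (inverse h)) \<longlongrightarrow> 0) (at_right (0::real))"
      using filterlim_compose[OF poly_exp_lim filterlim_inverse_at_top_right] .
    moreover have "eventually (\<lambda>h. (\<lambda>s. poly (Pf n) s * s / exp s) (inverse h) = (fd n (0 + h) - fd n 0) / h) (at_right 0)"
      by (rule eventually_at_rightI[of 0 1]) (simp_all add: fd_def exp_minus divide_inverse mult_ac)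
    ultimately show ?thesis using tendsto_cong by fast
  qed
  have l: "((\<lambda>h. (fd n (0 + h) - fd n 0) / h) \<longlongrightarrow> 0) (at_left 0)"
  proof -
    have "eventually (\<lambda>h. 0 = (fd n (0 + h) - fd n 0) / h) (at_left (0::real))"
      by (rule eventually_at_leftI[of "-1"]) (auto simp: fd_def)
    then show ?thesis using tendsto_cong[of "\<lambda>h. 0"] tendsto_const by fast
  qed
  show ?thesis unfolding DERIV_def using filterlim_split_at[OF l r] .
qed

lemma fd_deriv: "(fd n has_real_derivative fd (Suc n) t) (at t)"
proof (cases "t > 0")
  case True
  have "((\<lambda>t. poly (Pf n) (1/t) * exp (-(1/t))) has_real_derivative fd (Suc n) t) (at t)"
    using fd_pos_deriv[OF True, of "Pf n"] True by (simp add: fd_def)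
  then show ?thesis
    by (rule has_field_derivative_transform_within_open[where S="{0<..}"]) (use True in \<open>auto simp: fd_def\<close>)
next
  case False
  show ?thesis
  proof (cases "t = 0")
    case True
    then show ?thesis using fd_deriv0[of n] by (simp add: fd_def)
  next
    case False2: False
    with False have t: "t < 0" by simp
    have "((\<lambda>t. 0) has_real_derivative 0) (at t)" by simp
    then have "(fd n has_real_derivative 0) (at t)"
      by (rule has_field_derivative_transform_within_open[where S="{..<0}"]) (use t in \<open>auto simp: fd_def\<close>)
    then show ?thesis using t by (simp add: fd_def)
  qed
qed

lemma fd_pos: "t > 0 \<Longrightarrow> fd 0 t > 0" by (simp add: fd_def)
lemma fd_nonpos: "t \<le> 0 \<Longrightarrow> fd 0 t = 0" by (simp add: fd_def)
lemma fd_nonneg: "fd 0 t \<ge> 0" by (simp add: fd_def)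



lemma smooth_fd:
  assumes "smooth_fun \<rho>"
  shows "smooth_fun (\<lambda>x. fd n (\<rho> x))"
  by (rule smooth_comp_family[where fd=fd, OF fd_deriv assms])

lemma smooth_sqdist: "smooth_fun (\<lambda>x::real^'n. norm (x - c) ^ 2)"
proof -
  have "norm (x - c) ^ 2 = (\<Sum>i\<in>UNIV. (x$i - c$i) * (x$i - c$i))" for x :: "real^'n"
    by (simp add: power2_norm_eq_inner inner_vec_def)
  moreover have "smooth_fun (\<lambda>x::real^'n. \<Sum>i\<in>UNIV. (x$i - c$i) * (x$i - c$i))"
    by (intro smooth_sum smooth_mult smooth_diff smooth_component smooth_const) simp
  ultimately show ?thesis by simp
qed

lemma cutoff:
  fixes K F :: "(real^'n) set"
  assumes K: "compact K" and F: "closed F" and KF: "K \<inter> F = {}"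
  shows "\<exists>ch W. smooth_fun ch \<and> open W \<and> F \<subseteq> W \<and> (\<forall>x\<in>W. ch x = 0) \<and> (\<forall>x\<in>K. ch x = 1)"
proof (cases "K = {}")
  case True
  then show ?thesis using smooth_const[of 0] by (intro exI[of _ "\<lambda>x. 0"] exI[of _ UNIV]) auto
next
  case Kne: False
  have "\<forall>x\<in>K. \<exists>r>0. cball x r \<inter> F = {}"
  proof
    fix x assume "x \<in> K"
    then have "x \<in> - F" using KF by auto
    then obtain e where e: "e > 0" "ball x e \<subseteq> - F" using F open_contains_ball by (metis open_Compl)
    then have "cball x (e/2) \<inter> F = {}"
    proof -
      have "cball x (e/2) \<subseteq> ball x e" using \<open>e>0\<close> by (auto simp: subset_eq)
      with e show ?thesis by blast
    qed
    then show "\<exists>r>0. cball x r \<inter> F = {}" using e by (intro exI[of _ "e/2"]) auto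
  qed
  then obtain r where r: "\<And>x. x \<in> K \<Longrightarrow> r x > 0 \<and> cball x (r x) \<inter> F = {}" by metis
  have "K \<subseteq> (\<Union>c\<in>K. ball c (r c))" using r by force
  then obtain C where C: "C \<subseteq> K" "finite C" "K \<subseteq> (\<Union>c\<in>C. ball c (r c))"
    using compactE_image[OF K, of K "\<lambda>c. ball c (r c)"] by auto
  define \<rho> where "\<rho> x = (\<Sum>c\<in>C. fd 0 (r c ^ 2 - norm (x - c) ^ 2))" for x
  have s\<rho>: "smooth_fun \<rho>"
    unfolding \<rho>_def by (intro smooth_sum smooth_fd smooth_diff smooth_const smooth_sqdist C)
  have \<rho>0: "\<rho> x \<ge> 0" for x unfolding \<rho>_def by (intro sum_nonneg) (simp add: fd_nonneg)
  have \<rho>K: "\<rho> x > 0" if xK: "x \<in> K" for x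
  proof -
    obtain c where c: "c \<in> C" "x \<in> ball c (r c)" using C xK by blast
    have rc: "r c > 0" using r C c by auto
    have "norm (x - c) < r c" using c by (simp add: dist_norm norm_minus_commute)
    then have "norm (x - c) ^ 2 < r c ^ 2" by (simp add: power_strict_mono)
    then have "fd 0 (r c ^ 2 - norm (x - c) ^ 2) > 0" by (simp add: fd_pos)
    then show ?thesis unfolding \<rho>_def
      using C(2) c(1) by (intro sum_pos2[of C c]) (auto simp: fd_nonneg)
  qed
  have c\<rho>: "continuous_on K \<rho>"
    using smooth_funD[OF s\<rho>] continuous_on_subset by blast
  obtain x0 where x0: "x0 \<in> K" "\<forall>y\<in>K. \<rho> x0 \<le> \<rho> y"
    using continuous_attains_inf[OF K Kne c\<rho>] by blast
  define m where "m = \<rho> x0"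
  have m: "m > 0" using \<rho>K x0 m_def by auto
  define W where "W = - (\<Union>c\<in>C. cball c (r c))"
  have oW: "open W" unfolding W_def using C(2) by (intro open_Compl closed_UN) auto
  have FW: "F \<subseteq> W" unfolding W_def using r C(1) by blast
  have \<rho>W: "\<rho> x = 0" if xW: "x \<in> W" for x
    unfolding \<rho>_def
  proof (intro sum.neutral ballI)
    fix c assume c: "c \<in> C"
    then have "x \<notin> cball c (r c)" using xW W_def by auto
    then have "r c < norm (x - c)" by (simp add: dist_norm norm_minus_commute)
    moreover have "r c > 0" using r C c by auto
    ultimately have "r c ^ 2 < norm (x - c) ^ 2" by (simp add: power_strict_mono)
    then show "fd 0 (r c ^ 2 - norm (x - c) ^ 2) = 0" by (simp add: fd_nonpos)
  qed
  define D where "D x = fd 0 (\<rho> x) + fd 0 (m - \<rho> x)" for x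
  have D: "D x > 0" for x
  proof (cases "\<rho> x > 0")
    case True then show ?thesis unfolding D_def using fd_pos[of "\<rho> x"] fd_nonneg[of "m - \<rho> x"] by simp
  next
    case False then have "m - \<rho> x > 0" using \<rho>0[of x] m by simp
    then show ?thesis unfolding D_def using fd_pos[of "m - \<rho> x"] fd_nonneg[of "\<rho> x"] by simp
  qed
  have sD: "smooth_fun D" unfolding D_def
    by (intro smooth_add smooth_fd smooth_diff smooth_const s\<rho>)
  define ch where "ch x = fd 0 (\<rho> x) / D x" for x
  have sch: "smooth_fun ch" unfolding ch_def
    using smooth_divide[OF sD _ smooth_fd[OF s\<rho>]] D by (metis less_irrefl)
  have "\<forall>x\<in>W. ch x = 0" using \<rho>W by (simp add: ch_def fd_nonpos)
  moreover have "\<forall>x\<in>K. ch x = 1"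
  proof
    fix x assume "x \<in> K"
    then have "m - \<rho> x \<le> 0" using x0 m_def by auto
    then have "D x = fd 0 (\<rho> x)" by (simp add: D_def fd_nonpos)
    moreover have "fd 0 (\<rho> x) > 0" using \<rho>K \<open>x\<in>K\<close> fd_pos by blast
    ultimately show "ch x = 1" by (simp add: ch_def)
  qed
  ultimately show ?thesis using sch oW FW by blast
qed



lemma local_conn:
  fixes \<Omega> :: "(real^'n) set"
  assumes dom: "C2_domain \<Omega>" and x0: "x0 \<in> frontier \<Omega>" and rho: "\<rho> > 0"
  shows "\<exists>\<epsilon>>0. \<forall>y\<in>\<Omega> \<inter> ball x0 \<epsilon>. \<forall>z\<in>\<Omega> \<inter> ball x0 \<epsilon>.
            \<exists>C. connected C \<and> y \<in> C \<and> z \<in> C \<and> C \<subseteq> \<Omega> \<inter> ball x0 \<rho>"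
proof -
  obtain r \<psi> where r: "r > 0" and c2: "C2_on \<psi> (ball x0 r)"
    and nz: "\<forall>x\<in>ball x0 r. frechet_derivative \<psi> (at x) \<noteq> (\<lambda>h. 0)"
    and eq: "\<Omega> \<inter> ball x0 r = {x\<in>ball x0 r. \<psi> x < 0}"
    using dom x0 unfolding C2_domain_def by blast
  obtain g H where gd: "\<forall>x\<in>ball x0 r. (\<psi> has_derivative (\<lambda>h. g x \<bullet> h)) (at x)"
    and Hd: "\<forall>x\<in>ball x0 r. (g has_derivative (\<lambda>h. H x *v h)) (at x)"
    using c2 unfolding C2_on_def by blast
  define v where "v = g x0"
  have x0b: "x0 \<in> ball x0 r" using r by simp
  have "v \<noteq> 0"
  proof
    assume "v = 0"
    have "frechet_derivative \<psi> (at x0) = (\<lambda>h. g x0 \<bullet> h)"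
      using frechet_derivative_at[OF gd[rule_format, OF x0b]] by simp
    then have "frechet_derivative \<psi> (at x0) = (\<lambda>h. 0)"
      using \<open>v = 0\<close> v_def by simp
    then show False using nz x0b by blast
  qed
  define a where "a = norm v"
  have a: "a > 0" using \<open>v \<noteq> 0\<close> a_def by simp
  have "isCont g x0" using has_derivative_continuous[OF Hd[rule_format, OF x0b]] .
  then obtain \<delta> where \<delta>: "\<delta> > 0" "\<forall>w. dist w x0 < \<delta> \<longrightarrow> dist (g w) v < a/3"
    unfolding continuous_at_eps_delta v_def using a by (metis divide_pos_pos zero_less_numeral)
  define d where "d = min \<delta> r"
  have d: "d > 0" "d \<le> r" using \<delta> r d_def by auto
  have bound: "\<psi> w' \<le> \<psi> w + v \<bullet> (w' - w) + a/3 * norm (w' - w)"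
    if w: "w \<in> ball x0 d" and w': "w' \<in> ball x0 d" for w w'
  proof -
    let ?f = "\<lambda>x. \<psi> x - v \<bullet> x"
    have "norm (?f w' - ?f w) \<le> a/3 * norm (w' - w)"
    proof (rule differentiable_bound[where f'="\<lambda>x h. (g x - v) \<bullet> h"])
      show "convex (ball x0 d)" by simp
      fix x assume x: "x \<in> ball x0 d"
      then have xr: "x \<in> ball x0 r" using d by auto
      have "(?f has_derivative (\<lambda>h. g x \<bullet> h - v \<bullet> h)) (at x)"
        by (intro has_derivative_diff gd[rule_format, OF xr] has_derivative_inner_right) (rule has_derivative_ident)
      then show "(?f has_derivative (\<lambda>h. (g x - v) \<bullet> h)) (at x within ball x0 d)"
        by (simp add: inner_diff_left has_derivative_at_withinI)
      have "dist x x0 < \<delta>" using x d_def by (simp add: dist_commute)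
      then have gv: "norm (g x - v) \<le> a/3" using \<delta> by (simp add: dist_norm less_imp_le)
      show "onorm (\<lambda>h. (g x - v) \<bullet> h) \<le> a/3"
      proof (rule onorm_le)
        fix h
        have "norm ((g x - v) \<bullet> h) \<le> norm (g x - v) * norm h"
          using Cauchy_Schwarz_ineq2 by simp
        also have "\<dots> \<le> a/3 * norm h" using gv by (intro mult_right_mono) auto
        finally show "norm ((g x - v) \<bullet> h) \<le> a/3 * norm h" .
      qed
    qed (use w w' in auto)
    then have "\<psi> w' - v \<bullet> w' - (\<psi> w - v \<bullet> w) \<le> a/3 * norm (w' - w)"
      by (metis abs_le_iff real_norm_def)
    then show ?thesis by (simp add: inner_diff_right)
  qed
  have inO: "w \<in> \<Omega>" if "w \<in> ball x0 r" "\<psi> w < 0" for w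
    using eq that by blast
  have psineg: "\<psi> w < 0" if "w \<in> \<Omega>" "w \<in> ball x0 r" for w
    using eq that by blast
  define \<epsilon> where "\<epsilon> = min d \<rho> / 6"
  have \<epsilon>: "\<epsilon> > 0" "6 * \<epsilon> \<le> d" "6 * \<epsilon> \<le> \<rho>" using d rho \<epsilon>_def by auto
  define t where "t = 4 * \<epsilon> / a"
  have t: "t > 0" "t * a = 4 * \<epsilon>" using \<epsilon> a t_def by auto
  have vv: "v \<bullet> v = a * a" using a_def by (simp add: dot_square_norm power2_eq_square)
  have ballsub: "ball x0 (6*\<epsilon>) \<subseteq> ball x0 d \<inter> ball x0 \<rho> \<inter> ball x0 r" using \<epsilon> d by auto
  have seg1: "closed_segment p (p - t *\<^sub>R v) \<subseteq> \<Omega> \<inter> ball x0 (6*\<epsilon>)"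
    if p: "p \<in> \<Omega>" "p \<in> ball x0 \<epsilon>" for p
  proof
    fix w assume "w \<in> closed_segment p (p - t *\<^sub>R v)"
    then obtain u where u: "0 \<le> u" "u \<le> 1" "w = (1 - u) *\<^sub>R p + u *\<^sub>R (p - t *\<^sub>R v)"
      unfolding closed_segment_def by blast
    define s where "s = u * t"
    have s: "0 \<le> s" "s \<le> t" using u t s_def by (auto simp: mult_le_cancel_right1)
    have w: "w = p - s *\<^sub>R v" using u(3) s_def by (simp add: algebra_simps)
    have "dist x0 w \<le> dist x0 p + norm (s *\<^sub>R v)" using w
      by (metis dist_norm dist_triangle2 norm_minus_commute diff_diff_eq2 add_diff_cancel_left' dist_commute
          order_refl dist_diff(1)[of p "s *\<^sub>R v"] diff_zero)
    also have "\<dots> < \<epsilon> + t * a"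
    proof -
      have "s * norm v \<le> t * norm v" using s by (intro mult_right_mono) auto
      then show ?thesis using p(2) s a_def by (simp add: dist_commute)
    qed
    finally have wb: "w \<in> ball x0 (6*\<epsilon>)" using t \<epsilon> by simp
    have pd: "p \<in> ball x0 d" "p \<in> ball x0 r" using p(2) \<epsilon> d by auto
    have "\<psi> w \<le> \<psi> p + v \<bullet> (w - p) + a/3 * norm (w - p)"
      by (rule bound) (use pd wb ballsub in auto)
    also have "\<dots> = \<psi> p - s * (a * a) + a/3 * (s * a)"
      using w s a_def vv by (simp add: inner_commute)
    also have "\<dots> \<le> \<psi> p" using s a by (simp add: algebra_simps mult_left_mono)
    finally have "\<psi> w < 0" using psineg[OF p(1) pd(2)] by simp
    then show "w \<in> \<Omega> \<inter> ball x0 (6*\<epsilon>)" using inO wb ballsub by blast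
  qed
  have seg2: "closed_segment (y - t *\<^sub>R v) (z - t *\<^sub>R v) \<subseteq> \<Omega> \<inter> ball x0 (6*\<epsilon>)"
    if y: "y \<in> \<Omega>" "y \<in> ball x0 \<epsilon>" and z: "z \<in> ball x0 \<epsilon>" for y z
  proof
    fix w assume "w \<in> closed_segment (y - t *\<^sub>R v) (z - t *\<^sub>R v)"
    then obtain u where u: "0 \<le> u" "u \<le> 1" "w = (1 - u) *\<^sub>R (y - t *\<^sub>R v) + u *\<^sub>R (z - t *\<^sub>R v)"
      unfolding closed_segment_def by blast
    define m where "m = (1 - u) *\<^sub>R y + u *\<^sub>R z"
    have w: "w = m - t *\<^sub>R v" unfolding u(3) m_def by (simp add: algebra_simps)
    have "m \<in> closed_segment y z" using u m_def closed_segment_def by blast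
    then have mb: "m \<in> ball x0 \<epsilon>" using y z convex_ball[of x0 \<epsilon>]
      by (meson closed_segment_subset subsetD)
    have my: "norm (m - y) < 2 * \<epsilon>" using mb y(2)
      by (metis dist_norm dist_triangle_less_add mem_ball dist_commute mult_2)
    have "dist x0 w \<le> dist x0 m + norm (t *\<^sub>R v)" using w
      by (metis dist_diff(1) dist_norm dist_triangle norm_minus_commute order_trans diff_zero
          dist_commute dist_triangle2)
    also have "\<dots> < \<epsilon> + t * a" using mb t a_def by simp
    finally have wb: "w \<in> ball x0 (6*\<epsilon>)" using t \<epsilon> by simp
    have yd: "y \<in> ball x0 d" "y \<in> ball x0 r" using y(2) \<epsilon> d by auto
    have e1: "\<psi> w \<le> \<psi> y + v \<bullet> (w - y) + a/3 * norm (w - y)"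
      by (rule bound) (use yd wb ballsub in auto)
    have e2: "v \<bullet> (w - y) = v \<bullet> (m - y) - t * (a * a)"
      unfolding w using vv by (simp add: inner_diff_right algebra_simps)
    have "v \<bullet> (m - y) \<le> a * norm (m - y)"
      using norm_cauchy_schwarz[of v "m - y"] a_def by simp
    also have "\<dots> \<le> a * (2 * \<epsilon>)" using my a by (intro mult_left_mono) auto
    finally have e3: "v \<bullet> (m - y) \<le> a * (2 * \<epsilon>)" .
    have wy: "w - y = (m - y) - t *\<^sub>R v" unfolding w by (simp add: algebra_simps)
    have "norm (w - y) \<le> norm (m - y) + norm (t *\<^sub>R v)"
      unfolding wy by (rule norm_triangle_ineq4)
    also have "norm (t *\<^sub>R v) = t * a" using t a_def by simp
    finally have e4: "norm (w - y) \<le> norm (m - y) + t * a" .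
    have "a/3 * norm (w - y) \<le> a/3 * (6 * \<epsilon>)"
      using e4 my t a by (intro mult_left_mono) auto
    moreover have "a/3 * (6 * \<epsilon>) = 2 * (a * \<epsilon>)" by simp
    moreover have "t * (a * a) = 4 * (a * \<epsilon>)" using t(2) by (metis mult.assoc mult.commute)
    moreover have "a * (2 * \<epsilon>) = 2 * (a * \<epsilon>)" by simp
    ultimately have "\<psi> w \<le> \<psi> y" using e1 e2 e3 by linarith
    then have "\<psi> w < 0" using psineg[OF y(1) yd(2)] by simp
    then show "w \<in> \<Omega> \<inter> ball x0 (6*\<epsilon>)" using inO wb ballsub by blast
  qed
  show ?thesis
  proof (intro exI[of _ \<epsilon>] conjI ballI \<epsilon>)
    fix y z assume y: "y \<in> \<Omega> \<inter> ball x0 \<epsilon>" and z: "z \<in> \<Omega> \<inter> ball x0 \<epsilon>"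
    define C where "C = closed_segment y (y - t *\<^sub>R v) \<union> closed_segment (y - t *\<^sub>R v) (z - t *\<^sub>R v)
       \<union> closed_segment (z - t *\<^sub>R v) z"
    have "C \<subseteq> \<Omega> \<inter> ball x0 (6*\<epsilon>)"
      unfolding C_def using seg1[of y] seg1[of z] seg2[of y z] y z
      by (auto simp: closed_segment_commute)
    also have "\<dots> \<subseteq> \<Omega> \<inter> ball x0 \<rho>" using ballsub by auto
    finally have Csub: "C \<subseteq> \<Omega> \<inter> ball x0 \<rho>" .
    have "connected C" unfolding C_def
      by (intro connected_Un) (auto simp: ends_in_segment)
    then show "\<exists>C. connected C \<and> y \<in> C \<and> z \<in> C \<and> C \<subseteq> \<Omega> \<inter> ball x0 \<rho>"
      using Csub by (intro exI[of _ C]) (auto simp: C_def)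
  qed
qed



lemma frontier_open: "open S \<Longrightarrow> frontier S = closure S - S"
  by (simp add: frontier_def interior_open)

lemma grad_local:
  assumes "open Ob" "x \<in> Ob" "\<And>y. y \<in> Ob \<Longrightarrow> f y = h y" "smooth_fun h"
  shows "grad f x = grad h x"
proof -
  have "(f has_derivative frechet_derivative h (at x)) (at x)"
    using has_derivative_transform_within_open[OF smooth_deriv[OF assms(4)] assms(1,2)] assms(3)
    by metis
  then have "frechet_derivative f (at x) = frechet_derivative h (at x)"
    using frechet_derivative_at by metis
  then show ?thesis by (simp add: grad_def partial_deriv_def)
qed

lemma grad_zero:
  assumes "open Ob" "x \<in> Ob" "\<And>y. y \<in> Ob \<Longrightarrow> f y = 0"
  shows "grad f x = 0"
proof -
  have "(f has_derivative (\<lambda>h. 0)) (at x)"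
    using has_derivative_transform_within_open[OF has_derivative_const[of 0] assms(1,2)] assms(3)
    by metis
  then have "frechet_derivative f (at x) = (\<lambda>h. 0)"
    using frechet_derivative_at by metis
  then show ?thesis by (simp add: grad_def partial_deriv_def vec_eq_iff)
qed

lemma extension:
  fixes \<Omega>1 \<Omega>2 \<Gamma>1 \<Gamma>2 :: "(real^'n) set"
  assumes d1: "C2_domain \<Omega>1" and d2: "C2_domain \<Omega>2"
    and "closed \<Gamma>1" and "\<Gamma>1 \<subseteq> frontier \<Omega>1"
    and "closed \<Gamma>2" and "\<Gamma>2 \<subseteq> frontier \<Omega>2"
    and sub: "\<Omega>2 \<subseteq> \<Omega>1"
    and h1: "frontier \<Omega>2 \<inter> \<Omega>1 \<subseteq> \<Gamma>2"
    and h2: "\<Gamma>1 \<inter> frontier \<Omega>2 \<subseteq> \<Gamma>2"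
    and phi: "\<phi> \<in> test_class \<Omega>2 \<Gamma>2"
  shows "\<exists>\<psi>\<in>test_class \<Omega>1 \<Gamma>1. (\<forall>x\<in>closure \<Omega>2. \<psi> x = \<phi> x) \<and>
           (\<forall>x\<in>\<Omega>1 - \<Omega>2. \<psi> x = 0 \<and> grad \<psi> x = 0) \<and>
           (\<forall>x\<in>\<Omega>2. grad \<psi> x = grad \<phi> x) \<and>
           (\<forall>x\<in>frontier \<Omega>1 - frontier \<Omega>2. \<psi> x = 0)"
proof -
  have o1: "open \<Omega>1" and o2: "open \<Omega>2" and b2: "bounded \<Omega>2"
    using d1 d2 unfolding C2_domain_def by auto
  obtain U where U: "open U" "\<Gamma>2 \<subseteq> U" "\<forall>x\<in>U \<inter> closure \<Omega>2. \<phi> x = 0"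
    and sphi: "smooth_fun \<phi>"
    using phi unfolding test_class_def by blast
  define K where "K = closure \<Omega>2 - U"
  define F where "F = closure (\<Omega>1 - closure \<Omega>2) \<union> \<Gamma>1"
  have cK: "compact K" unfolding K_def
    using b2 U(1) bounded_closure[OF b2] bounded_subset[of "closure \<Omega>2" "closure \<Omega>2 - U"]
    by (simp add: compact_eq_bounded_closed closed_Diff Diff_subset)
  have cF: "closed F" unfolding F_def using assms(3) by (intro closed_Un) auto
  have fr1: "frontier \<Omega>1 = closure \<Omega>1 - \<Omega>1" using frontier_open[OF o1] .
  have fr2: "frontier \<Omega>2 = closure \<Omega>2 - \<Omega>2" using frontier_open[OF o2] .
  have cl21: "closure \<Omega>2 \<subseteq> closure \<Omega>1" using sub closure_mono by blast
  have KF: "K \<inter> F = {}"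
  proof (rule ccontr)
    assume "K \<inter> F \<noteq> {}"
    then obtain x where xK: "x \<in> K" and xF: "x \<in> F" by blast
    have xc2: "x \<in> closure \<Omega>2" and xU: "x \<notin> U" using xK K_def by auto
    show False
    proof (cases "x \<in> \<Gamma>1")
      case True
      then have "x \<notin> \<Omega>1" using assms(4) fr1 by auto
      then have "x \<in> frontier \<Omega>2" using xc2 sub fr2 by auto
      then show False using True h2 U(2) xU by auto
    next
      case False
      then have xcl: "x \<in> closure (\<Omega>1 - closure \<Omega>2)" using xF F_def by auto
      have "\<Omega>2 \<inter> closure (\<Omega>1 - closure \<Omega>2) = {}"
        using open_Int_closure_eq_empty[OF o2] closure_subset by fastforce
      then have "x \<notin> \<Omega>2" using xcl by auto
      then have xf2: "x \<in> frontier \<Omega>2" using xc2 fr2 by auto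
      have "x \<notin> \<Omega>1" using xf2 h1 U(2) xU by auto
      then have xf1: "x \<in> frontier \<Omega>1" using xc2 cl21 fr1 by auto
      have "x \<notin> \<Gamma>2" using U(2) xU by auto
      then obtain \<rho> where \<rho>: "\<rho> > 0" "ball x \<rho> \<inter> \<Gamma>2 = {}"
        using assms(5) open_contains_ball[of "- \<Gamma>2"] by (metis Compl_iff disjoint_eq_subset_Compl open_Compl)
      obtain \<epsilon> where \<epsilon>: "\<epsilon> > 0" and conn: "\<forall>y\<in>\<Omega>1 \<inter> ball x \<epsilon>. \<forall>z\<in>\<Omega>1 \<inter> ball x \<epsilon>.
            \<exists>C. connected C \<and> y \<in> C \<and> z \<in> C \<and> C \<subseteq> \<Omega>1 \<inter> ball x \<rho>"
        using local_conn[OF d1 xf1 \<rho>(1)] by blast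
      obtain y where y: "y \<in> \<Omega>1 - closure \<Omega>2" "dist x y < \<epsilon>"
        using closure_approachableD[OF xcl \<epsilon>] by blast
      obtain z where z: "z \<in> \<Omega>2" "dist x z < \<epsilon>"
        using closure_approachableD[OF xc2 \<epsilon>] by blast
      obtain C where C: "connected C" "y \<in> C" "z \<in> C" "C \<subseteq> \<Omega>1 \<inter> ball x \<rho>"
      proof -
        have "y \<in> \<Omega>1 \<inter> ball x \<epsilon>" "z \<in> \<Omega>1 \<inter> ball x \<epsilon>" using y z sub by auto
        then show ?thesis using conn that by blast
      qed
      have "C \<inter> \<Omega>2 \<noteq> {}" using C z by auto
      moreover have "C - \<Omega>2 \<noteq> {}" using C(2) y(1) closure_subset[of \<Omega>2] by blast
      ultimately have "C \<inter> frontier \<Omega>2 \<noteq> {}" using connected_Int_frontier C(1) by blast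
      then obtain w where "w \<in> C" "w \<in> frontier \<Omega>2" by blast
      then have "w \<in> \<Gamma>2" "w \<in> ball x \<rho>" using C(4) h1 by auto
      then show False using \<rho>(2) by auto
    qed
  qed
  obtain ch W where ch: "smooth_fun ch" "open W" "F \<subseteq> W" "\<forall>x\<in>W. ch x = 0" "\<forall>x\<in>K. ch x = 1"
    using cutoff[OF cK cF KF] by blast
  define \<psi> where "\<psi> x = \<phi> x * ch x" for x
  have s\<psi>: "smooth_fun \<psi>" unfolding \<psi>_def using smooth_mult[OF sphi ch(1)] .
  have tc: "\<psi> \<in> test_class \<Omega>1 \<Gamma>1"
    unfolding test_class_def using s\<psi> ch F_def
    by (intro CollectI conjI exI[of _ W]) (auto simp: \<psi>_def)
  have a: "\<forall>x\<in>closure \<Omega>2. \<psi> x = \<phi> x"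
  proof
    fix x assume x: "x \<in> closure \<Omega>2"
    show "\<psi> x = \<phi> x"
    proof (cases "x \<in> U")
      case True then show ?thesis using U(3) x by (simp add: \<psi>_def)
    next
      case False then show ?thesis using ch(5) x K_def by (simp add: \<psi>_def)
    qed
  qed
  define Ob where "Ob = \<Omega>1 \<inter> (U \<union> W)"
  have oO: "open Ob" unfolding Ob_def using o1 U(1) ch(2) by auto
  have zO: "\<psi> y = 0" if y: "y \<in> Ob" for y
  proof (cases "y \<in> closure \<Omega>2")
    case True
    then show ?thesis using y U(3) ch(4) unfolding Ob_def \<psi>_def by auto
  next
    case False
    then have "y \<in> \<Omega>1 - closure \<Omega>2" using y unfolding Ob_def by auto
    then have "y \<in> F" using closure_subset[of "\<Omega>1 - closure \<Omega>2"] unfolding F_def by blast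
    then show ?thesis using ch(3,4) by (simp add: \<psi>_def subset_eq)
  qed
  have b: "\<forall>x\<in>\<Omega>1 - \<Omega>2. \<psi> x = 0 \<and> grad \<psi> x = 0"
  proof
    fix x assume x: "x \<in> \<Omega>1 - \<Omega>2"
    have "x \<in> Ob"
    proof (cases "x \<in> closure \<Omega>2")
      case True
      then have "x \<in> frontier \<Omega>2" using x fr2 by auto
      then show ?thesis using x h1 U(2) Ob_def by auto
    next
      case False
      then have "x \<in> \<Omega>1 - closure \<Omega>2" using x by auto
      then have "x \<in> F" using closure_subset[of "\<Omega>1 - closure \<Omega>2"] unfolding F_def by blast
      then show ?thesis using x ch(3) Ob_def by auto
    qed
    then show "\<psi> x = 0 \<and> grad \<psi> x = 0" using zO grad_zero[OF oO] by blast
  qed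
  have c: "\<forall>x\<in>\<Omega>2. grad \<psi> x = grad \<phi> x"
    using grad_local[OF o2 _ _ sphi] a closure_subset by (metis subsetD)
  have d: "\<forall>x\<in>frontier \<Omega>1 - frontier \<Omega>2. \<psi> x = 0"
  proof
    fix x assume x: "x \<in> frontier \<Omega>1 - frontier \<Omega>2"
    then have "x \<notin> \<Omega>1" using fr1 by auto
    then have "x \<notin> closure \<Omega>2" using x fr2 sub by auto
    moreover have "x \<in> closure \<Omega>1" using x fr1 by auto
    ultimately have "x \<in> (- closure \<Omega>2) \<inter> closure \<Omega>1" by auto
    also have "\<dots> \<subseteq> closure (- closure \<Omega>2 \<inter> \<Omega>1)" by (rule open_Int_closure_subset) auto
    also have "\<dots> \<subseteq> F" unfolding F_def by (simp add: Diff_eq inf_commute)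
    finally show "\<psi> x = 0" using ch(3,4) by (auto simp: \<psi>_def)
  qed
  show ?thesis using tc a b c d by blast
qed



lemma sets_haus: "sets (hausdorff_measure s :: ('a::metric_space) measure) = sets borel"
  and space_haus: "space (hausdorff_measure s :: ('a::metric_space) measure) = UNIV"
proof -
  interpret sigma_algebra "UNIV :: 'a set" "sets borel"
    using sets.sigma_algebra_axioms[of "borel :: 'a measure"] by simp
  show "sets (hausdorff_measure s :: 'a measure) = sets borel"
    unfolding hausdorff_measure_def by simp
  show "space (hausdorff_measure s :: 'a measure) = UNIV"
    unfolding hausdorff_measure_def by simp
qed

lemma closed_haus_sets:
  fixes A :: "('a::metric_space) set"
  assumes "closed A" shows "A \<inter> space (hausdorff_measure s) \<in> sets (hausdorff_measure s)"
  using assms by (simp add: sets_haus space_haus borel_closed)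

lemma sob_norm_ext:
  assumes sub: "\<Omega>2 \<subseteq> \<Omega>1"
    and on2: "\<And>x. x \<in> \<Omega>2 \<Longrightarrow> u1 x = u2 x \<and> G1 x = G2 x"
    and on1: "\<And>x. x \<in> \<Omega>1 - \<Omega>2 \<Longrightarrow> u1 x = 0 \<and> G1 x = 0"
  shows "sob_norm p \<Omega>1 u1 G1 = sob_norm p \<Omega>2 u2 G2"
proof -
  have "(\<integral>\<^sup>+ x \<in> \<Omega>1. ennreal (\<bar>u1 x / t\<bar> powr p x + (norm (G1 x) / t) powr p x) \<partial>lebesgue) =
        (\<integral>\<^sup>+ x \<in> \<Omega>2. ennreal (\<bar>u2 x / t\<bar> powr p x + (norm (G2 x) / t) powr p x) \<partial>lebesgue)" for t
  proof (rule nn_integral_cong)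
    fix x
    show "ennreal (\<bar>u1 x / t\<bar> powr p x + (norm (G1 x) / t) powr p x) * indicator \<Omega>1 x =
          ennreal (\<bar>u2 x / t\<bar> powr p x + (norm (G2 x) / t) powr p x) * indicator \<Omega>2 x"
      using sub on1[of x] on2[of x] by (cases "x \<in> \<Omega>2"; cases "x \<in> \<Omega>1") auto
  qed
  then show ?thesis unfolding sob_norm_def by simp
qed

theorem lemma5p2:
  fixes \<Omega>1 \<Omega>2 \<Gamma>1 \<Gamma>2 :: "(real^'n) set" and p q :: "real^'n \<Rightarrow> real"
  assumes "CARD('n) \<ge> 2"
    and "C2_domain \<Omega>1" and "C2_domain \<Omega>2"
    and "closed \<Gamma>1" and "\<Gamma>1 \<subseteq> frontier \<Omega>1"
    and "closed \<Gamma>2" and "\<Gamma>2 \<subseteq> frontier \<Omega>2"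
    and "\<forall>x\<in>closure \<Omega>1. p x \<ge> 1" and "\<forall>x\<in>closure \<Omega>1. q x \<ge> 1"
    and "p \<in> borel_measurable (restrict_space lebesgue (closure \<Omega>1))"
    and "q \<in> borel_measurable (restrict_space lebesgue (closure \<Omega>1))"
    and "q \<in> borel_measurable (surface_measure \<Omega>1)"
    and "q \<in> borel_measurable (surface_measure \<Omega>2)"
    and "\<Omega>2 \<subseteq> \<Omega>1"
    and "frontier \<Omega>2 \<inter> \<Omega>1 \<subseteq> \<Gamma>2"
    and "\<Gamma>1 \<inter> frontier \<Omega>2 \<subseteq> \<Gamma>2"
  shows "T_const p q \<Omega>1 \<Gamma>1 \<le> T_const p q \<Omega>2 \<Gamma>2"
proof -
  let ?H = "hausdorff_measure (real CARD('n) - 1) :: (real^'n) measure"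
  have d1: "C2_domain \<Omega>1" and d2: "C2_domain \<Omega>2" and sub: "\<Omega>2 \<subseteq> \<Omega>1"
    and h1: "frontier \<Omega>2 \<inter> \<Omega>1 \<subseteq> \<Gamma>2" and G2f: "\<Gamma>2 \<subseteq> frontier \<Omega>2" and cG2: "closed \<Gamma>2"
    using assms by auto
  have o1: "open \<Omega>1" and o2: "open \<Omega>2"
    using d1 d2 unfolding C2_domain_def by auto
  have fr1: "frontier \<Omega>1 = closure \<Omega>1 - \<Omega>1" using frontier_open[OF o1] .
  have fr2: "frontier \<Omega>2 = closure \<Omega>2 - \<Omega>2" using frontier_open[OF o2] .
  have cl21: "closure \<Omega>2 \<subseteq> closure \<Omega>1" using sub closure_mono by blast
  have S1: "surface_measure \<Omega>1 = restrict_space ?H (frontier \<Omega>1)" by (simp add: surface_measure_def)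
  have S2: "surface_measure \<Omega>2 = restrict_space ?H (frontier \<Omega>2)" by (simp add: surface_measure_def)
  have F1: "frontier \<Omega>1 \<inter> space ?H \<in> sets ?H" by (rule closed_haus_sets) simp
  have F2: "frontier \<Omega>2 \<inter> space ?H \<in> sets ?H" by (rule closed_haus_sets) simp
  have fr2sub: "frontier \<Omega>2 - frontier \<Omega>1 \<subseteq> \<Gamma>2"
    using fr1 fr2 cl21 h1 by auto
  have main: "T_const p q \<Omega>1 \<Gamma>1 \<le> sob_norm p \<Omega>2 u G / bnd_norm q \<Omega>2 g"
    if W: "W_trace p \<Omega>2 \<Gamma>2 u G g" and nt: "\<not> (AE x in surface_measure \<Omega>2. g x = 0)" for u G g
  proof -
    obtain \<phi> where mu: "u \<in> borel_measurable lebesgue" and mG: "G \<in> borel_measurable lebesgue"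
      and mg: "g \<in> borel_measurable (surface_measure \<Omega>2)"
      and tc: "\<forall>k. \<phi> k \<in> test_class \<Omega>2 \<Gamma>2"
      and cs: "((\<lambda>k. sob_norm p \<Omega>2 (\<lambda>x. \<phi> k x - u x) (\<lambda>x. grad (\<phi> k) x - G x)) \<longlongrightarrow> 0) sequentially"
      and cb: "((\<lambda>k. \<integral>\<^sup>+ x. ennreal \<bar>\<phi> k x - g x\<bar> \<partial>surface_measure \<Omega>2) \<longlongrightarrow> 0) sequentially"
      using W unfolding W_trace_def by blast
    have "\<forall>k. \<exists>\<psi>\<in>test_class \<Omega>1 \<Gamma>1. (\<forall>x\<in>closure \<Omega>2. \<psi> x = \<phi> k x) \<and>
           (\<forall>x\<in>\<Omega>1 - \<Omega>2. \<psi> x = 0 \<and> grad \<psi> x = 0) \<and>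
           (\<forall>x\<in>\<Omega>2. grad \<psi> x = grad (\<phi> k) x) \<and>
           (\<forall>x\<in>frontier \<Omega>1 - frontier \<Omega>2. \<psi> x = 0)"
      using extension[OF d1 d2 assms(4-7) sub h1 assms(16)] tc by blast
    then obtain \<psi> where \<psi>: "\<And>k. \<psi> k \<in> test_class \<Omega>1 \<Gamma>1"
      "\<And>k x. x \<in> closure \<Omega>2 \<Longrightarrow> \<psi> k x = \<phi> k x"
      "\<And>k x. x \<in> \<Omega>1 - \<Omega>2 \<Longrightarrow> \<psi> k x = 0 \<and> grad (\<psi> k) x = 0"
      "\<And>k x. x \<in> \<Omega>2 \<Longrightarrow> grad (\<psi> k) x = grad (\<phi> k) x"
      "\<And>k x. x \<in> frontier \<Omega>1 - frontier \<Omega>2 \<Longrightarrow> \<psi> k x = 0"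
      by metis
    define u' where "u' x = (if x \<in> \<Omega>2 then u x else 0)" for x
    define G' where "G' x = (if x \<in> \<Omega>2 then G x else 0)" for x
    define g' where "g' x = (if x \<in> frontier \<Omega>2 then g x else 0)" for x
    have z\<Gamma>: "\<phi> k x = 0" if "x \<in> \<Gamma>2" for k x
    proof -
      obtain U where "\<Gamma>2 \<subseteq> U" "\<forall>x\<in>U \<inter> closure \<Omega>2. \<phi> k x = 0"
        using tc unfolding test_class_def by blast
      moreover have "x \<in> closure \<Omega>2" using that G2f fr2 by auto
      ultimately show ?thesis using that by blast
    qed
    have G2sets: "\<Gamma>2 \<in> sets (surface_measure \<Omega>2)"
      unfolding S2 using F2 G2f cG2 by (subst sets_restrict_space_iff) (auto simp: sets_haus borel_closed)
    have mI: "(\<lambda>x. ennreal (indicator \<Gamma>2 x * \<bar>g x\<bar>)) \<in> borel_measurable (surface_measure \<Omega>2)"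
      by (intro measurable_compose[OF _ measurable_ennreal] borel_measurable_times borel_measurable_indicator
          borel_measurable_abs mg G2sets)
    have Ile: "(\<integral>\<^sup>+ x. ennreal (indicator \<Gamma>2 x * \<bar>g x\<bar>) \<partial>surface_measure \<Omega>2) \<le>
               (\<integral>\<^sup>+ x. ennreal \<bar>\<phi> k x - g x\<bar> \<partial>surface_measure \<Omega>2)" for k
      by (rule nn_integral_mono) (auto simp: indicator_def z\<Gamma>)
    have "(\<integral>\<^sup>+ x. ennreal (indicator \<Gamma>2 x * \<bar>g x\<bar>) \<partial>surface_measure \<Omega>2) \<le> 0"
      by (rule tendsto_lowerbound[OF cb]) (use Ile in auto)
    then have "AE x in surface_measure \<Omega>2. ennreal (indicator \<Gamma>2 x * \<bar>g x\<bar>) = 0"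
      using nn_integral_0_iff_AE[OF mI] by simp
    then have "AE x in surface_measure \<Omega>2. x \<in> \<Gamma>2 \<longrightarrow> g x = 0"
      by (rule AE_mp) (auto simp: indicator_def)
    then have AE\<Gamma>: "AE x in ?H. x \<in> frontier \<Omega>2 \<longrightarrow> x \<in> \<Gamma>2 \<longrightarrow> g x = 0"
      using iffD1[OF AE_restrict_space_iff[OF F2, of "\<lambda>x. x \<in> \<Gamma>2 \<longrightarrow> g x = 0"]] unfolding S2 by blast
    have sobeq: "sob_norm p \<Omega>1 u' G' = sob_norm p \<Omega>2 u G"
      by (rule sob_norm_ext[OF sub]) (auto simp: u'_def G'_def)
    have sobk: "sob_norm p \<Omega>1 (\<lambda>x. \<psi> k x - u' x) (\<lambda>x. grad (\<psi> k) x - G' x) =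
         sob_norm p \<Omega>2 (\<lambda>x. \<phi> k x - u x) (\<lambda>x. grad (\<phi> k) x - G x)" for k
    proof (rule sob_norm_ext[OF sub])
      fix x assume x: "x \<in> \<Omega>2"
      then have "x \<in> closure \<Omega>2" using closure_subset by blast
      then show "\<psi> k x - u' x = \<phi> k x - u x \<and> grad (\<psi> k) x - G' x = grad (\<phi> k) x - G x"
        using x \<psi>(2,4) by (simp add: u'_def G'_def)
    next
      fix x assume "x \<in> \<Omega>1 - \<Omega>2"
      then show "\<psi> k x - u' x = 0 \<and> grad (\<psi> k) x - G' x = 0"
        using \<psi>(3) by (simp add: u'_def G'_def)
    qed
    have bndeq: "bnd_norm q \<Omega>1 g' = bnd_norm q \<Omega>2 g"
    proof -
      have "(\<integral>\<^sup>+ x. ennreal (\<bar>g' x / t\<bar> powr q x) \<partial>surface_measure \<Omega>1) =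
            (\<integral>\<^sup>+ x. ennreal (\<bar>g x / t\<bar> powr q x) \<partial>surface_measure \<Omega>2)" for t
        unfolding S1 S2 nn_integral_restrict_space[OF F1] nn_integral_restrict_space[OF F2]
      proof (rule nn_integral_cong_AE)
        show "AE x in ?H. ennreal (\<bar>g' x / t\<bar> powr q x) * indicator (frontier \<Omega>1) x =
                 ennreal (\<bar>g x / t\<bar> powr q x) * indicator (frontier \<Omega>2) x"
          using AE\<Gamma>
        proof (rule AE_mp, intro AE_I2 impI)
          fix x assume A: "x \<in> frontier \<Omega>2 \<longrightarrow> x \<in> \<Gamma>2 \<longrightarrow> g x = 0"
          show "ennreal (\<bar>g' x / t\<bar> powr q x) * indicator (frontier \<Omega>1) x =
                 ennreal (\<bar>g x / t\<bar> powr q x) * indicator (frontier \<Omega>2) x"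
          proof (cases "x \<in> frontier \<Omega>2")
            case True
            then show ?thesis using A fr2sub by (cases "x \<in> frontier \<Omega>1") (auto simp: g'_def)
          next
            case False
            then show ?thesis by (simp add: g'_def)
          qed
        qed
      qed
      then show ?thesis unfolding bnd_norm_def by simp
    qed
    have Wt: "W_trace p \<Omega>1 \<Gamma>1 u' G' g'"
      unfolding W_trace_def
    proof (intro conjI exI[of _ \<psi>])
      have "\<Omega>2 \<inter> space lebesgue \<in> sets lebesgue" using o2 by simp
      then show "u' \<in> borel_measurable lebesgue" "G' \<in> borel_measurable lebesgue"
        unfolding u'_def G'_def by (auto intro!: measurable_If_set mu mG)
      have "g' \<in> borel_measurable ?H"
        using measurable_restrict_space_iff[OF F2, of 0 borel g] mg unfolding S2 g'_def by simp
      then show "g' \<in> borel_measurable (surface_measure \<Omega>1)"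
        unfolding S1 by (rule measurable_restrict_space1)
      show "\<forall>k. \<psi> k \<in> test_class \<Omega>1 \<Gamma>1" using \<psi>(1) by blast
      show "((\<lambda>k. sob_norm p \<Omega>1 (\<lambda>x. \<psi> k x - u' x) (\<lambda>x. grad (\<psi> k) x - G' x)) \<longlongrightarrow> 0) sequentially"
        using cs sobk by simp
      have le: "(\<integral>\<^sup>+ x. ennreal \<bar>\<psi> k x - g' x\<bar> \<partial>surface_measure \<Omega>1) \<le>
                (\<integral>\<^sup>+ x. ennreal \<bar>\<phi> k x - g x\<bar> \<partial>surface_measure \<Omega>2)" for k
        unfolding S1 S2 nn_integral_restrict_space[OF F1] nn_integral_restrict_space[OF F2]
      proof (rule nn_integral_mono)
        fix x
        show "ennreal \<bar>\<psi> k x - g' x\<bar> * indicator (frontier \<Omega>1) x \<le>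
              ennreal \<bar>\<phi> k x - g x\<bar> * indicator (frontier \<Omega>2) x"
        proof (cases "x \<in> frontier \<Omega>2")
          case True
          then have "x \<in> closure \<Omega>2" using fr2 by auto
          then show ?thesis using True \<psi>(2) by (cases "x \<in> frontier \<Omega>1") (auto simp: g'_def)
        next
          case False
          then show ?thesis using \<psi>(5) by (cases "x \<in> frontier \<Omega>1") (auto simp: g'_def)
        qed
      qed
      show "((\<lambda>k. \<integral>\<^sup>+ x. ennreal \<bar>\<psi> k x - g' x\<bar> \<partial>surface_measure \<Omega>1) \<longlongrightarrow> 0) sequentially"
        by (rule tendsto_sandwich[OF _ _ tendsto_const cb]) (use le in auto)
    qed
    have nt': "\<not> (AE x in surface_measure \<Omega>1. g' x = 0)"
    proof
      assume "AE x in surface_measure \<Omega>1. g' x = 0"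
      then have A1: "AE x in ?H. x \<in> frontier \<Omega>1 \<longrightarrow> g' x = 0"
        using iffD1[OF AE_restrict_space_iff[OF F1, of "\<lambda>x. g' x = 0"]] unfolding S1 by blast
      have "AE x in ?H. x \<in> frontier \<Omega>2 \<longrightarrow> g x = 0"
        using A1 AE\<Gamma>
      proof (eventually_elim)
        case (elim x)
        then show ?case using fr2sub by (auto simp: g'_def)
      qed
      then have "AE x in surface_measure \<Omega>2. g x = 0"
        using iffD2[OF AE_restrict_space_iff[OF F2, of "\<lambda>x. g x = 0"]] unfolding S2 by blast
      then show False using nt by blast
    qed
    have "T_const p q \<Omega>1 \<Gamma>1 \<le> sob_norm p \<Omega>1 u' G' / bnd_norm q \<Omega>1 g'"
      unfolding T_const_def by (rule Inf_lower) (use Wt nt' in blast)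
    then show ?thesis using sobeq bndeq by simp
  qed
  show ?thesis
    unfolding T_const_def[of p q \<Omega>2 \<Gamma>2]
    by (rule Inf_greatest) (use main in auto)
qed

end
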